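(* Let $(\Omega,\mathcal F,\mathbb P)$ be a probability space carrying a group of measurable bijections $\{\theta_n\}_{n\in\mathbb Z}$ each preserving $\mathbb P$, and let $\{a_n\}_{n\in\mathbb Z}$ be i.i.d. random variables with values in $\{1,2,\dots\}$, compatible with the flow, with $\mathbb E[a_0]<\infty$ and $\mathbb P[a_0=1]>0$. Let $N_n=\#\{m\in\mathbb Z: m<n,\ m+a_m>n\}+1$ and $\Psi^o=\{m\in\mathbb Z:N_m=1\}$. Then under the Palm probability $\mathbb P_{\Psi^o}[\cdot]=\mathbb P[\cdot\mid 0\in\Psi^o]=\mathbb P[\cdot\mid N_0=1]$, the sequence $\{a_n\}_{n<0}$ is independent of $\{a_n\}_{n\ge 0}$.
   Context: A flow-compatible sequence means $a_n(\omega)=a_0(\theta_n\omega)$ for all $n$. The event $\{0\in\Psi^o\}$ has positive probability under these assumptions, so the conditional probability is well defined. *)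

theory Defs
  imports "HOL-Probability.Probability" "HOL-Library.Extended_Nat"
begin

definition covering_set :: "(int \<Rightarrow> 'w \<Rightarrow> nat) \<Rightarrow> int \<Rightarrow> 'w \<Rightarrow> int set" where
  "covering_set a n \<omega> = {m. m < n \<and> m + int (a m \<omega>) > n}"

definition Ncount :: "(int \<Rightarrow> 'w \<Rightarrow> nat) \<Rightarrow> int \<Rightarrow> 'w \<Rightarrow> enat" where
  "Ncount a n \<omega> =
     (if finite (covering_set a n \<omega>) then enat (card (covering_set a n \<omega>)) else \<infinity>) + 1"

definition Psi_o :: "(int \<Rightarrow> 'w \<Rightarrow> nat) \<Rightarrow> 'w \<Rightarrow> int set" where
  "Psi_o a \<omega> = {m. Ncount a m \<omega> = 1}"

definition palm :: "'w measure \<Rightarrow> (int \<Rightarrow> 'w \<Rightarrow> nat) \<Rightarrow> 'w measure" where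
  "palm M a = uniform_measure M {\<omega> \<in> space M. 0 \<in> Psi_o a \<omega>}"

end

theory Submission imports Defs begin

lemma sum_ind_le: "(\<Sum>j\<in>{1..n}. (if j < x then 1 else 0::real)) \<le> real x"
proof -
  have "(\<Sum>j\<in>{1..n}. (if j < x then 1 else 0::real)) = real (min n (x - 1))"
  proof (induction n)
    case 0 then show ?case by simp
  next
    case (Suc n) then show ?case by (auto simp: min_def)
  qed
  then show ?thesis by simp
qed

lemma exp_le_F:
  fixes F c :: real assumes "0 < c" "c \<le> F" "F \<le> 1"
  shows "exp (- (1 - F) / c) \<le> F"
proof -
  have Fp: "F > 0" using assms by simp
  have "ln (1 / F) \<le> 1 / F - 1" using Fp by (intro ln_le_minus_one) simp
  then have "- (1 - F) / F \<le> ln F" using Fp by (simp add: ln_div field_simps)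
  moreover have "- (1 - F) / c \<le> - (1 - F) / F"
  proof -
    have "(1 - F) / F \<le> (1 - F) / c" using assms by (intro divide_left_mono) auto
    then show ?thesis by (simp only: minus_divide_left[symmetric])
  qed
  ultimately have "- (1 - F) / c \<le> ln F" by linarith
  then have "exp (- (1 - F) / c) \<le> exp (ln F)" by simp
  then show ?thesis using Fp by simp
qed

lemma T_meas: "{f \<in> space (PiM {..<0::int} (\<lambda>_. count_space (UNIV::nat set))). \<forall>m\<in>{..<0}. f m \<le> nat (-m)}
   \<in> sets (PiM {..<0::int} (\<lambda>_. count_space UNIV))"
  by measurable

lemma E_char:
  "(0 \<in> Psi_o a \<omega>) \<longleftrightarrow> (\<forall>m<0. a m \<omega> \<le> nat (-m))"
proof -
  have "(0 \<in> Psi_o a \<omega>) \<longleftrightarrow> covering_set a 0 \<omega> = {}"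
  proof -
    have "Ncount a 0 \<omega> = 1 \<longleftrightarrow> finite (covering_set a 0 \<omega>) \<and> card (covering_set a 0 \<omega>) = 0"
      unfolding Ncount_def by (simp add: one_enat_def enat_0_iff)
    then show ?thesis unfolding Psi_o_def by auto
  qed
  also have "\<dots> \<longleftrightarrow> (\<forall>m<0. a m \<omega> \<le> nat (-m))"
    unfolding covering_set_def by (auto; force)
  finally show ?thesis .
qed

lemma E_pos:
  fixes M :: "'w measure" and a :: "int \<Rightarrow> 'w \<Rightarrow> nat"
  assumes P: "prob_space M"
    and a_indep: "prob_space.indep_vars M (\<lambda>_. count_space UNIV) a UNIV"
    and a_ident: "\<And>n. distr M (count_space UNIV) (a n) = distr M (count_space UNIV) (a 0)"
    and a_pos: "\<And>n \<omega>. \<omega> \<in> space M \<Longrightarrow> a n \<omega> \<ge> 1"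
    and a_int: "integrable M (\<lambda>\<omega>. real (a 0 \<omega>))"
    and a_one: "measure M {\<omega> \<in> space M. a 0 \<omega> = 1} > 0"
  shows "measure M {\<omega> \<in> space M. \<forall>m<0. a m \<omega> \<le> nat (-m)} > 0"
proof -
  interpret prob_space M by (rule P)
  have meas[measurable]: "\<And>n. a n \<in> M \<rightarrow>\<^sub>M count_space UNIV"
    using a_indep unfolding indep_vars_def2 by blast
  define F where "F j = prob {\<omega>\<in>space M. a 0 \<omega> \<le> j}" for j :: nat
  define c where "c = prob {\<omega>\<in>space M. a 0 \<omega> = 1}"
  define S where "S = expectation (\<lambda>\<omega>. real (a 0 \<omega>))"
  have Fa: "prob {\<omega>\<in>space M. a n \<omega> \<le> j} = F j" for n j
  proof -
    have "prob {\<omega>\<in>space M. a n \<omega> \<le> j} = measure (distr M (count_space UNIV) (a n)) {..j}"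
    proof -
      have "{\<omega>\<in>space M. a n \<omega> \<le> j} = a n -` {..j} \<inter> space M" by auto
      then show ?thesis by (simp add: measure_distr[OF meas])
    qed
    also have "\<dots> = measure (distr M (count_space UNIV) (a 0)) {..j}" by (subst a_ident[of n]) (rule refl)
    also have "\<dots> = F j"
    proof -
      have "{\<omega>\<in>space M. a 0 \<omega> \<le> j} = a 0 -` {..j} \<inter> space M" by auto
      then show ?thesis by (simp add: measure_distr[OF meas] F_def)
    qed
    finally show ?thesis .
  qed
  have c0: "c > 0" using a_one by (simp add: c_def)
  have Fc: "c \<le> F j" if "j \<ge> 1" for j
    unfolding c_def F_def using that by (intro finite_measure_mono) auto
  have F1: "F j \<le> 1" for j by (simp add: F_def)
  have q: "1 - F j = expectation (indicator {\<omega>\<in>space M. \<not> a 0 \<omega> \<le> j})" for j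
  proof -
    have "1 - F j = prob (space M - {\<omega>\<in>space M. a 0 \<omega> \<le> j})"
      unfolding F_def by (subst prob_compl) auto
    also have "space M - {\<omega>\<in>space M. a 0 \<omega> \<le> j} = {\<omega>\<in>space M. \<not> a 0 \<omega> \<le> j}" by auto
    finally show ?thesis by simp
  qed
  have Isets: "{\<omega>\<in>space M. \<not> a 0 \<omega> \<le> j} \<in> sets M" for j by measurable
  have Iint: "integrable M (indicator {\<omega>\<in>space M. \<not> a 0 \<omega> \<le> j} :: 'w \<Rightarrow> real)" for j
    by (rule integrable_real_indicator[OF Isets]) (simp add: less_top[symmetric])
  have sumq: "(\<Sum>j\<in>{1..n}. 1 - F j) \<le> S" for n
  proof -
    have "(\<Sum>j\<in>{1..n}. 1 - F j) = expectation (\<lambda>\<omega>. \<Sum>j\<in>{1..n}. indicator {\<omega>\<in>space M. \<not> a 0 \<omega> \<le> j} \<omega>)"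
      unfolding q using Iint by (subst Bochner_Integration.integral_sum) auto
    also have "\<dots> \<le> S"
      unfolding S_def
    proof (rule integral_mono)
      show "integrable M (\<lambda>\<omega>. \<Sum>j\<in>{1..n}. indicator {\<omega>\<in>space M. \<not> a 0 \<omega> \<le> j} \<omega> :: real)"
        using Iint by auto
      show "integrable M (\<lambda>\<omega>. real (a 0 \<omega>))" by (rule a_int)
      fix \<omega> assume "\<omega> \<in> space M"
      then have "(\<Sum>j\<in>{1..n}. indicator {\<omega>\<in>space M. \<not> a 0 \<omega> \<le> j} \<omega> :: real)
          = (\<Sum>j\<in>{1..n}. (if j < a 0 \<omega> then 1 else 0))"
        by (intro sum.cong) (auto simp: indicator_def)
      also have "\<dots> \<le> real (a 0 \<omega>)" by (rule sum_ind_le)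
      finally show "(\<Sum>j\<in>{1..n}. indicator {\<omega>\<in>space M. \<not> a 0 \<omega> \<le> j} \<omega> :: real) \<le> real (a 0 \<omega>)" .
    qed
    finally show ?thesis .
  qed
  define Q where "Q i = {\<omega>\<in>space M. a i \<omega> \<le> nat (-i)}" for i
  define Ek where "Ek k = (\<Inter>i\<in>{-int k - 1..-1}. Q i)" for k :: nat
  have indep: "indep_events Q UNIV"
    unfolding Q_def by (rule indep_eventsI_indep_vars[OF a_indep]) auto
  have Q_sets: "Q i \<in> sets M" for i unfolding Q_def by measurable
  have prodEk: "prob (Ek k) = (\<Prod>j\<in>{1..Suc k}. F j)" for k
  proof -
    have "prob (Ek k) = (\<Prod>i\<in>{-int k - 1..-1}. prob (Q i))"
      unfolding Ek_def using indep by (subst (asm) indep_events_def) auto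
    also have "\<dots> = (\<Prod>i\<in>{-int k - 1..-1}. F (nat (-i)))"
      by (simp add: Q_def Fa)
    also have "\<dots> = (\<Prod>j\<in>{1..Suc k}. F j)"
    proof (rule prod.reindex_bij_witness[where i="\<lambda>j. - int j" and j="\<lambda>i. nat (-i)"]) 
    qed auto
    finally show ?thesis .
  qed
  have lower: "exp (- S / c) \<le> prob (Ek k)" for k
  proof -
    have "exp (- S / c) \<le> exp (- (\<Sum>j\<in>{1..Suc k}. 1 - F j) / c)"
    proof -
      have "- S / c \<le> - (\<Sum>j\<in>{1..Suc k}. 1 - F j) / c"
        using sumq[of "Suc k"] c0 by (intro divide_right_mono) auto
      then show ?thesis by simp
    qed
    also have "\<dots> = (\<Prod>j\<in>{1..Suc k}. exp (- (1 - F j) / c))"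
    proof -
      have eq: "(\<Sum>j\<in>{1..Suc k}. - (1 - F j) / c) = - (\<Sum>j\<in>{1..Suc k}. 1 - F j) / c"
        by (simp add: sum_divide_distrib[symmetric] sum_subtractf)
      show ?thesis by (metis eq exp_sum finite_atLeastAtMost)
    qed
    also have "\<dots> \<le> (\<Prod>j\<in>{1..Suc k}. F j)"
      by (intro prod_mono conjI exp_le_F c0 Fc F1) auto
    finally show ?thesis by (simp add: prodEk)
  qed
  have Eint: "(\<Inter>k. Ek k) = {\<omega> \<in> space M. \<forall>m<0. a m \<omega> \<le> nat (-m)}"
  proof safe
    fix \<omega> assume "\<omega> \<in> (\<Inter>k. Ek k)"
    then have "\<omega> \<in> Ek 0" by auto
    then show "\<omega> \<in> space M" by (auto simp: Ek_def Q_def)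
    fix m :: int assume "m < 0"
    from \<open>\<omega> \<in> (\<Inter>k. Ek k)\<close> have "\<omega> \<in> Ek (nat (-m))" by auto
    then show "a m \<omega> \<le> nat (-m)" using \<open>m < 0\<close> by (auto simp: Ek_def Q_def)
  next
    fix \<omega> k assume "\<omega> \<in> space M" "\<forall>m<0. a m \<omega> \<le> nat (-m)"
    then show "\<omega> \<in> Ek k" by (auto simp: Ek_def Q_def)
  qed
  have "(\<lambda>n. prob (Ek n)) \<longlonglongrightarrow> prob (\<Inter>k. Ek k)"
  proof (rule Lim_measure_decseq)
    show "range Ek \<subseteq> events" unfolding Ek_def using Q_sets by auto
    show "decseq Ek" unfolding decseq_def Ek_def by auto
  qed auto
  then have "exp (- S / c) \<le> prob (\<Inter>k. Ek k)"
    by (rule LIMSEQ_le_const) (use lower in auto)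
  then show ?thesis unfolding Eint by (smt (verit) exp_gt_zero)
qed

theorem mainTheorem2:
  fixes M :: "'w measure"
    and \<theta> :: "int \<Rightarrow> 'w \<Rightarrow> 'w"
    and a :: "int \<Rightarrow> 'w \<Rightarrow> nat"
  assumes P: "prob_space M"
    and theta_meas: "\<And>n. \<theta> n \<in> M \<rightarrow>\<^sub>M M"
    and theta_bij: "\<And>n. bij_betw (\<theta> n) (space M) (space M)"
    and theta_pres: "\<And>n. distr M M (\<theta> n) = M"
    and theta_zero: "\<And>\<omega>. \<omega> \<in> space M \<Longrightarrow> \<theta> 0 \<omega> = \<omega>"
    and theta_add: "\<And>n m \<omega>. \<omega> \<in> space M \<Longrightarrow> \<theta> (n + m) \<omega> = \<theta> n (\<theta> m \<omega>)"
    and a_indep: "prob_space.indep_vars M (\<lambda>_. count_space UNIV) a UNIV"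
    and a_ident: "\<And>n. distr M (count_space UNIV) (a n) = distr M (count_space UNIV) (a 0)"
    and a_pos: "\<And>n \<omega>. \<omega> \<in> space M \<Longrightarrow> a n \<omega> \<ge> 1"
    and a_flow: "\<And>n \<omega>. \<omega> \<in> space M \<Longrightarrow> a n \<omega> = a 0 (\<theta> n \<omega>)"
    and a_int: "integrable M (\<lambda>\<omega>. real (a 0 \<omega>))"
    and a_one: "measure M {\<omega> \<in> space M. a 0 \<omega> = 1} > 0"
  shows "prob_space.indep_var (palm M a)
           (PiM {..<0} (\<lambda>_. count_space UNIV)) (\<lambda>\<omega>. \<lambda>n\<in>{..<0}. a n \<omega>)
           (PiM {0..} (\<lambda>_. count_space UNIV)) (\<lambda>\<omega>. \<lambda>n\<in>{0..}. a n \<omega>)"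
proof -
  interpret prob_space M by (rule P)
  define E where "E = {\<omega> \<in> space M. \<forall>m<0. a m \<omega> \<le> nat (-m)}"
  define X where "X = (\<lambda>\<omega>. \<lambda>n\<in>{..<0::int}. a n \<omega>)"
  define Y where "Y = (\<lambda>\<omega>. \<lambda>n\<in>{0::int..}. a n \<omega>)"
  define SX where "SX = PiM {..<0::int} (\<lambda>_. count_space (UNIV::nat set))"
  define SY where "SY = PiM {0::int..} (\<lambda>_. count_space (UNIV::nat set))"
  have Epos: "measure M E > 0" unfolding E_def
    by (rule E_pos[OF P a_indep a_ident a_pos a_int a_one])
  have palm_eq: "palm M a = uniform_measure M E"
    unfolding palm_def E_def using E_char[of a] by simp
  have indM: "indep_var SX X SY Y"
    unfolding SX_def SY_def X_def Y_def by (rule indep_var_restrict[OF a_indep]) auto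
  define AX where "AX = sigma_sets (space M) {X -` A \<inter> space M |A. A \<in> sets SX}"
  define AY where "AY = sigma_sets (space M) {Y -` A \<inter> space M |A. A \<in> sets SY}"
  note h = indM[unfolded indep_var_eq, folded AX_def AY_def]
  have rv: "X \<in> M \<rightarrow>\<^sub>M SX" "Y \<in> M \<rightarrow>\<^sub>M SY" and iset: "indep_set AX AY"
    using h by blast+
  note h2 = iset[unfolded indep_sets2_eq]
  have AXs: "AX \<subseteq> sets M" and AYs: "AY \<subseteq> sets M"
    and prodM: "\<And>x y. x \<in> AX \<Longrightarrow> y \<in> AY \<Longrightarrow> prob (x \<inter> y) = prob x * prob y"
    using h2 by blast+
  have sa: "sigma_algebra (space M) AX" unfolding AX_def
    by (rule sigma_algebra_sigma_sets) auto
  have EAX: "E \<in> AX"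
  proof -
    define T where "T = {f \<in> space SX. \<forall>m\<in>{..<0}. f m \<le> nat (-m)}"
    have "T \<in> sets SX" unfolding T_def SX_def by (rule T_meas)
    moreover have "E = X -` T \<inter> space M"
      using rv(1)[THEN measurable_space] unfolding E_def T_def X_def by auto
    ultimately show ?thesis unfolding AX_def by (auto intro: sigma_sets.Basic)
  qed
  have E_sets: "E \<in> sets M"
    using EAX AXs by blast
  have eE: "emeasure M E \<noteq> 0" "emeasure M E \<noteq> \<infinity>"
    using Epos emeasure_eq_measure by auto
  interpret Q: prob_space "palm M a"
    unfolding palm_eq by (rule prob_space_uniform_measure[OF eE])
  have palm_meas: "measure (palm M a) S = prob (E \<inter> S) / prob E" if "S \<in> sets M" for S
    unfolding palm_eq using eE that by simp
  show ?thesis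
    unfolding X_def[symmetric] Y_def[symmetric] SX_def[symmetric] SY_def[symmetric]
  proof (subst Q.indep_var_eq, intro conjI)
    show "X \<in> palm M a \<rightarrow>\<^sub>M SX" using rv(1) unfolding palm_eq measurable_cong_sets[OF sets_uniform_measure refl] .
    show "Y \<in> palm M a \<rightarrow>\<^sub>M SY" using rv(2) unfolding palm_eq measurable_cong_sets[OF sets_uniform_measure refl] .
    have sp: "space (palm M a) = space M" unfolding palm_eq by simp
    have ss: "sets (palm M a) = sets M" unfolding palm_eq by simp
    show "Q.indep_set (sigma_sets (space (palm M a)) {X -` A \<inter> space (palm M a) |A. A \<in> sets SX})
     (sigma_sets (space (palm M a)) {Y -` A \<inter> space (palm M a) |A. A \<in> sets SY})"
      unfolding sp AX_def[symmetric] AY_def[symmetric] Q.indep_sets2_eq ss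
    proof (intro conjI AXs AYs ballI)
      fix x y assume x: "x \<in> AX" and y: "y \<in> AY"
      have xs: "x \<in> sets M" and ys: "y \<in> sets M" using x y AXs AYs by auto
      have Ex: "E \<inter> x \<in> AX"
      proof -
        interpret SA: sigma_algebra "space M" AX by (rule sa)
        show ?thesis using EAX x by (rule SA.Int)
      qed
      have 1: "prob (E \<inter> (x \<inter> y)) = prob (E \<inter> x) * prob y"
        using prodM[OF Ex y] by (simp add: Int_assoc)
      have 2: "prob (E \<inter> y) = prob E * prob y" using prodM[OF EAX y] .
      show "measure (palm M a) (x \<inter> y) = measure (palm M a) x * measure (palm M a) y"
        using Epos xs ys by (simp add: palm_meas sets.Int 1 2)
    qed
  qed
qed
end
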